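(* Let $f:\mathbb{R}^d\to\mathbb{R}$ be convex and $M$-Lipschitz, i.e. $|f(x)-f(y)|\le M\|x-y\|$ for all $x,y$, and suppose $X^*\neq\emptyset$. Run the Proximal Bundle Method with parameter $\beta\in(0,1)$ and constant stepsize $\rho_k=\rho>0$ for all $k$. Let $D^2=\sup_k \mathrm{dist}(x_k,X^* )^2$ and assume $0<D^2<\infty$. Then for any $0<\epsilon\le f(x_0)-f^*$, the number of descent steps taken before the first iterate $x_k$ with $f(x_k)-f^*\le\epsilon$ is found is at most $$\frac{2\rho D^2}{\beta\epsilon}+\left\lceil \frac{2\log\left(\frac{f(x_0)-f^*}{\rho D^2}\right)}{\beta}\right\rceil_+,$$ and the number of null steps taken before then is at most $$\frac{48\rho M^2D^4}{\beta(1-\beta)^2\epsilon^3}+\frac{32M^2}{\beta(1-\beta)^2\rho^2D^2}.$$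
   Context: Throughout, $f:\mathbb{R}^d\to\mathbb{R}$ is a proper closed convex function attaining its minimum $f^*=\inf f$ on the nonempty set $X^*=\{x: f(x)=f^*\}$; $\mathrm{dist}(x,S)=\inf_{y\in S}\|x-y\|$; $\partial f(x)$ is the convex subdifferential; $\lceil a\rceil_+=\max\{\lceil a\rceil,0\}$. A subgradient oracle returns, for any $x$, the value $f(x)$ and some $g(x)\in\partial f(x)$. Proximal Bundle Method: fix $\beta\in(0,1)$, $x_0=z_0\in\mathbb{R}^d$, $g_0=g(x_0)$, and the initial model $f_0(x)=f(x_0)+\langle g_0,x-x_0\rangle$. At iteration $k\ge0$, given a convex model $f_k:\mathbb{R}^d\to\mathbb{R}$ and stepsize $\rho_k>0$, compute $z_{k+1}=\operatorname{argmin}_z f_k(z)+\frac{\rho_k}{2}\|z-x_k\|^2$. If $\beta(f(x_k)-f_k(z_{k+1}))\le f(x_k)-f(z_{k+1})$, iteration $k$ is a descent step and $x_{k+1}=z_{k+1}$; otherwise it is a null step and $x_{k+1}=x_k$. Then a new convex model $f_{k+1}$ and stepsize $\rho_{k+1}$ are chosen satisfying, with $g_{k+1}=g(z_{k+1})$ and $s_{k+1}=\rho_k(x_k-z_{k+1})$: (1) $f_{k+1}(x)\le f(x)$ for all $x$; (2) $f_{k+1}(x)\ge f(z_{k+1})+\langle g_{k+1},x-z_{k+1}\rangle$ for all $x$; (3) if iteration $k$ was a null step, $f_{k+1}(x)\ge f_k(z_{k+1})+\langle s_{k+1},x-z_{k+1}\rangle$ for all $x$; (4) if iteration $k$ was a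 null step, $\rho_{k+1}\ge\rho_k$. An $\epsilon$-minimizer is a point $x$ with $f(x)-f^*\le\epsilon$. *)

theory Defs
  imports "HOL-Analysis.Analysis"
begin

definition subdiff :: "('a::real_inner \<Rightarrow> real) \<Rightarrow> 'a \<Rightarrow> 'a set" where
  "subdiff f x = {s. \<forall>y. f y \<ge> f x + inner s (y - x)}"

definition fstar :: "('a \<Rightarrow> real) \<Rightarrow> real" where
  "fstar f = Inf (range f)"

definition Xstar :: "('a \<Rightarrow> real) \<Rightarrow> 'a set" where
  "Xstar f = {x. f x = fstar f}"

definition is_descent ::
  "('a::real_normed_vector \<Rightarrow> real) \<Rightarrow> real \<Rightarrow> (nat \<Rightarrow> 'a \<Rightarrow> real) \<Rightarrow> (nat \<Rightarrow> 'a) \<Rightarrow> (nat \<Rightarrow> 'a) \<Rightarrow> nat \<Rightarrow> bool" where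
  "is_descent f \<beta> fm x z k \<longleftrightarrow> \<beta> * (f (x k) - fm k (z (Suc k))) \<le> f (x k) - f (z (Suc k))"

text \<open>A run of the Proximal Bundle Method with subgradient map g, parameter \<beta>,
  stepsize sequence \<rho>, proximal centers x, trial points z and models fm.\<close>
definition pbm_run ::
  "('a::real_inner \<Rightarrow> real) \<Rightarrow> ('a \<Rightarrow> 'a) \<Rightarrow> real \<Rightarrow> (nat \<Rightarrow> real) \<Rightarrow>
   (nat \<Rightarrow> 'a) \<Rightarrow> (nat \<Rightarrow> 'a) \<Rightarrow> (nat \<Rightarrow> 'a \<Rightarrow> real) \<Rightarrow> bool" where
  "pbm_run f g \<beta> \<rho> x z fm \<longleftrightarrow>
     z 0 = x 0 \<and>
     fm 0 = (\<lambda>y. f (x 0) + inner (g (x 0)) (y - x 0)) \<and>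
     (\<forall>k. convex_on UNIV (fm k)) \<and>
     (\<forall>k. \<rho> k > 0) \<and>
     (\<forall>k w. fm k (z (Suc k)) + \<rho> k / 2 * (norm (z (Suc k) - x k))\<^sup>2
              \<le> fm k w + \<rho> k / 2 * (norm (w - x k))\<^sup>2) \<and>
     (\<forall>k. x (Suc k) = (if is_descent f \<beta> fm x z k then z (Suc k) else x k)) \<and>
     (\<forall>k y. fm (Suc k) y \<le> f y) \<and>
     (\<forall>k y. fm (Suc k) y \<ge> f (z (Suc k)) + inner (g (z (Suc k))) (y - z (Suc k))) \<and>
     (\<forall>k y. \<not> is_descent f \<beta> fm x z k \<longrightarrow>
        fm (Suc k) y \<ge> fm k (z (Suc k)) + inner (\<rho> k *\<^sub>R (x k - z (Suc k))) (y - z (Suc k))) \<and>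
     (\<forall>k. \<not> is_descent f \<beta> fm x z k \<longrightarrow> \<rho> (Suc k) \<ge> \<rho> k)"

end

theory Submission imports Defs begin

lemma norm_sq_add: "(norm (a + b))\<^sup>2 = (norm a)\<^sup>2 + 2 * inner a b + (norm (b::'a::real_inner))\<^sup>2"
  using dot_norm[of a b] by simp

lemma quad_lower: fixes v u :: "'a::real_inner" assumes "r > 0"
  shows "l * inner v u + r/2 * (norm u)\<^sup>2 \<ge> - (l\<^sup>2 * (norm v)\<^sup>2) / (2*r)"
proof -
  have "0 \<le> (norm (l *\<^sub>R v + r *\<^sub>R u))\<^sup>2" by simp
  also have "\<dots> = l\<^sup>2 * (norm v)\<^sup>2 + 2 * r * l * inner v u + r\<^sup>2 * (norm u)\<^sup>2"
    by (simp add: norm_sq_add power_mult_distrib)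
  finally have "0 \<le> l\<^sup>2 * (norm v)\<^sup>2 + 2 * r * l * inner v u + r\<^sup>2 * (norm u)\<^sup>2" .
  then show ?thesis using assms by (simp add: field_simps power2_eq_square)
qed

lemma nonneg_of_eps: fixes A B :: real assumes "B \<ge> 0" "\<And>t. 0 < t \<Longrightarrow> t \<le> 1 \<Longrightarrow> 0 \<le> A + t * B"
  shows "0 \<le> A"
proof (rule ccontr)
  assume "\<not> 0 \<le> A"
  define t where "t = min 1 (-A/(2*B+1))"
  have "-A/(2*B+1) > 0" using \<open>\<not> 0 \<le> A\<close> assms(1) by (intro divide_pos_pos) auto
  then have t: "0 < t" "t \<le> 1" by (auto simp: t_def)
  have "t * B \<le> (-A/(2*B+1)) * B" using assms(1) by (intro mult_right_mono) (auto simp: t_def)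
  also have "\<dots> < -A"
  proof -
    have "B/(2*B+1) < 1" using assms(1) by (simp add: field_simps)
    moreover have "-A > 0" using \<open>\<not> 0 \<le> A\<close> by simp
    ultimately have "(-A) * (B/(2*B+1)) < (-A) * 1" by (intro mult_strict_left_mono)
    then show ?thesis by simp
  qed
  finally show False using assms(2)[OF t] by linarith
qed

lemma prox_subgrad:
  fixes \<phi> :: "'a::real_inner \<Rightarrow> real"
  assumes cvx: "convex_on UNIV \<phi>" and opt: "\<And>w. \<phi> z + r/2*(norm (z - x))\<^sup>2 \<le> \<phi> w + r/2*(norm (w - x))\<^sup>2"
    and r: "r > 0"
  shows "\<phi> w \<ge> \<phi> z + inner (r *\<^sub>R (x - z)) (w - z)"
proof -
  let ?A = "\<phi> w - \<phi> z + r * inner (z - x) (w - z)"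
  let ?B = "r/2 * (norm (w - z))\<^sup>2"
  have key: "0 \<le> ?A + t * ?B" if t: "0 < t" "t \<le> 1" for t
  proof -
    have c: "\<phi> ((1 - t) *\<^sub>R z + t *\<^sub>R w) \<le> (1 - t) * \<phi> z + t * \<phi> w"
      using convex_onD[OF cvx, of t z w] t by auto
    have eq: "(1 - t) *\<^sub>R z + t *\<^sub>R w - x = (z - x) + t *\<^sub>R (w - z)" by (simp add: algebra_simps)
    have n: "(norm ((1 - t) *\<^sub>R z + t *\<^sub>R w - x))\<^sup>2 = (norm (z - x))\<^sup>2 + 2 * t * inner (z - x) (w - z) + t\<^sup>2 * (norm (w - z))\<^sup>2"
      unfolding eq norm_sq_add by (simp add: power_mult_distrib)
    have "\<phi> z + r/2*(norm (z - x))\<^sup>2 \<le> (1 - t) * \<phi> z + t * \<phi> w + r/2 * ((norm (z - x))\<^sup>2 + 2 * t * inner (z - x) (w - z) + t\<^sup>2 * (norm (w - z))\<^sup>2)"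
    proof -
      have "\<phi> z + r/2*(norm (z - x))\<^sup>2 \<le> \<phi> ((1 - t) *\<^sub>R z + t *\<^sub>R w) + r/2 * ((norm (z - x))\<^sup>2 + 2 * t * inner (z - x) (w - z) + t\<^sup>2 * (norm (w - z))\<^sup>2)"
        using opt[of "(1 - t) *\<^sub>R z + t *\<^sub>R w"] n by simp
      then show ?thesis using c by linarith
    qed
    moreover have "t * (?A + t * ?B) = (1 - t) * \<phi> z + t * \<phi> w + r/2 * ((norm (z - x))\<^sup>2 + 2 * t * inner (z - x) (w - z) + t\<^sup>2 * (norm (w - z))\<^sup>2) - (\<phi> z + r/2*(norm (z - x))\<^sup>2)"
      by (simp add: algebra_simps power2_eq_square)
    ultimately have "0 \<le> t * (?A + t * ?B)" by linarith
    then show ?thesis using t by (simp add: zero_le_mult_iff)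
  qed
  have B0: "?B \<ge> 0" using r by simp
  have "0 \<le> ?A" by (rule nonneg_of_eps[OF B0 key])
  moreover have "inner (r *\<^sub>R (x - z)) (w - z) = - (r * inner (z - x) (w - z))"
  proof -
    have "inner (x - z) (w - z) = - inner (z - x) (w - z)"
      using inner_minus_left[of "z - x" "w - z"] by simp
    then show ?thesis by (simp add: inner_scaleR_left)
  qed
  ultimately show ?thesis by linarith
qed


lemma recip_step: fixes a b k :: real
  assumes "0 < a" "0 < b" "b \<le> a - k * a\<^sup>2" "0 \<le> k"
  shows "1 / a + k \<le> 1 / b"
proof -
  have "b * (1/a + k) \<le> (a - k * a\<^sup>2) * (1/a + k)"
    using assms by (intro mult_right_mono) auto
  also have "\<dots> = 1 - k\<^sup>2 * a\<^sup>2" using assms(1) by (simp add: field_simps power2_eq_square)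
  also have "\<dots> \<le> 1" by simp
  finally have "b * (1/a + k) \<le> 1" .
  then show ?thesis using assms(2) by (simp add: le_divide_eq mult.commute)
qed

lemma set_Suc_filter: "{d. d < Suc n \<and> P d} = (if P n then insert n {d. d < n \<and> P d} else {d. d < n \<and> P d})"
  by (auto simp: less_Suc_eq)

lemma card_Suc_filter: "card {d. d < Suc n \<and> P d} = card {d. d < n \<and> P d} + (if P n then 1 else 0)"
  unfolding set_Suc_filter by auto

lemma sum_Suc_filter: "(\<Sum>d\<in>{d. d < Suc n \<and> P d}. F d) = (\<Sum>d\<in>{d. d < n \<and> P d}. F d) + (if P n then F n else (0::real))"
  unfolding set_Suc_filter by auto

lemma final_arith: fixes b r d e m k :: real
  assumes "b \<noteq> 0" "r \<noteq> 0" "d \<noteq> 0" "e \<noteq> 0" "m \<noteq> 0" "k \<noteq> 0"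
  shows "(4 / (b * (r * d)) + (2 * r * d / (b * e)) * (2 * r * d / e\<^sup>2)) / (r * k / (8 * m\<^sup>2))
     = 32 * r * m\<^sup>2 * d\<^sup>2 / (b * k * e ^ 3) + 32 * m\<^sup>2 / (b * k * r\<^sup>2 * d)"
  using assms by (simp add: field_simps power2_eq_square power3_eq_cube)

locale pbm =
  fixes f :: "'a::euclidean_space \<Rightarrow> real" and g :: "'a \<Rightarrow> 'a"
    and x z :: "nat \<Rightarrow> 'a" and fm :: "nat \<Rightarrow> 'a \<Rightarrow> real"
    and \<beta> \<rho> M D2 \<epsilon> :: real
  assumes convex: "convex_on UNIV f"
    and lip: "\<forall>u v. \<bar>f u - f v\<bar> \<le> M * norm (u - v)"
    and attained: "Xstar f \<noteq> {}"
    and subgr: "\<forall>u. g u \<in> subdiff f u"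
    and beta0: "0 < \<beta>" and beta1: "\<beta> < 1"
    and rho: "\<rho> > 0"
    and run: "pbm_run f g \<beta> (\<lambda>k. \<rho>) x z fm"
    and bdd: "bdd_above (range (\<lambda>k. (infdist (x k) (Xstar f))\<^sup>2))"
    and D2_def: "D2 = (SUP k. (infdist (x k) (Xstar f))\<^sup>2)"
    and D2_pos: "0 < D2"
    and eps0: "0 < \<epsilon>" and eps1: "\<epsilon> \<le> f (x 0) - fstar f"
begin

definition h where "h n = f (x n) - fstar f"
definition desc where "desc n = is_descent f \<beta> fm x z n"
definition phi where "phi n = fm n (z (Suc n)) + \<rho>/2 * (norm (z (Suc n) - x n))\<^sup>2"
definition e where "e n = f (x n) - phi n"
definition c where "c = \<rho> * (1 - \<beta>)\<^sup>2 / (8 * M\<^sup>2)"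

lemma R2: "fm 0 = (\<lambda>y. f (x 0) + inner (g (x 0)) (y - x 0))"
  and R3: "convex_on UNIV (fm k)"
  and R5: "fm k (z (Suc k)) + \<rho> / 2 * (norm (z (Suc k) - x k))\<^sup>2 \<le> fm k w + \<rho> / 2 * (norm (w - x k))\<^sup>2"
  and R6: "x (Suc k) = (if desc k then z (Suc k) else x k)"
  and R7: "fm (Suc k) y \<le> f y"
  and R8: "fm (Suc k) y \<ge> f (z (Suc k)) + inner (g (z (Suc k))) (y - z (Suc k))"
  and R9: "\<not> desc k \<Longrightarrow> fm (Suc k) y \<ge> fm k (z (Suc k)) + inner (\<rho> *\<^sub>R (x k - z (Suc k))) (y - z (Suc k))"
  using run unfolding pbm_run_def desc_def by auto

lemma subg: "f y \<ge> f u + inner (g u) (y - u)"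
  using subgr unfolding subdiff_def by auto

lemma fm_le: "fm k y \<le> f y"
proof (cases k)
  case 0 then show ?thesis using subg[of "x 0" y] R2 by simp
next
  case (Suc i) then show ?thesis using R7 by simp
qed

lemma lip2: "f u - f v \<le> M * norm (u - v)"
  using lip by (metis abs_le_D1)

lemma Mpos: "M > 0"
proof (rule ccontr)
  assume "\<not> M > 0"
  then have "f u = f (x 0)" for u
    using lip[rule_format, of u "x 0"] by (smt (verit) mult_nonpos_nonneg norm_ge_zero)
  then have "range f = {f (x 0)}" by auto
  then have "fstar f = f (x 0)" unfolding fstar_def by simp
  then show False using eps0 eps1 by linarith
qed

lemma g_bound: "norm (g u) \<le> M"
proof -
  have "f (u + g u) \<ge> f u + inner (g u) (g u)" using subg[of u "u + g u"] by simp
  moreover have "f (u + g u) - f u \<le> M * norm (g u)" using lip2[of "u + g u" u] by simp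
  ultimately have "(norm (g u))\<^sup>2 \<le> M * norm (g u)" by (simp add: power2_norm_eq_inner)
  then have a: "norm (g u) * norm (g u) \<le> M * norm (g u)" by (simp add: power2_eq_square)
  show ?thesis
  proof (rule ccontr)
    assume "\<not> norm (g u) \<le> M"
    then have "M * norm (g u) < norm (g u) * norm (g u)" using Mpos by (intro mult_strict_right_mono) auto
    then show False using a by linarith
  qed
qed


lemma f_cont: "continuous_on UNIV f"
  unfolding continuous_on_iff
proof (intro ballI allI impI)
  fix u and r :: real assume "r > 0"
  show "\<exists>d>0. \<forall>v\<in>UNIV. dist v u < d \<longrightarrow> dist (f v) (f u) < r"
  proof (intro exI[of _ "r / M"] conjI ballI impI)
    show "r / M > 0" using \<open>r > 0\<close> Mpos by simp
    fix v assume "dist v u < r / M"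
    then have "M * norm (v - u) < r" using Mpos by (simp add: dist_norm field_simps)
    then show "dist (f v) (f u) < r" using lip[rule_format, of v u] by (simp add: dist_real_def)
  qed
qed

lemma X_closed: "closed (Xstar f)"
proof -
  have "Xstar f = f -` {fstar f}" unfolding Xstar_def by auto
  then show ?thesis using f_cont by (simp add: continuous_on_closed_vimage)
qed

lemma closest: obtains xs where "f xs = fstar f" "(norm (xs - x n))\<^sup>2 \<le> D2"
proof -
  obtain xs where xs: "xs \<in> Xstar f" "infdist (x n) (Xstar f) = dist (x n) xs"
    using infdist_attains_inf[OF X_closed attained] by blast
  have "(infdist (x n) (Xstar f))\<^sup>2 \<le> D2" unfolding D2_def by (rule cSUP_upper[OF _ bdd]) simp
  then have "(norm (xs - x n))\<^sup>2 \<le> D2" using xs(2) by (simp add: dist_norm norm_minus_commute)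
  moreover have "f xs = fstar f" using xs(1) unfolding Xstar_def by simp
  ultimately show ?thesis using that by blast
qed

lemma opt: "phi n \<le> fm n w + \<rho>/2 * (norm (w - x n))\<^sup>2"
  using R5 unfolding phi_def by simp

lemma e_lower: assumes t: "0 \<le> t" "t \<le> 1" shows "e n \<ge> t * h n - \<rho> * t\<^sup>2 * D2 / 2"
proof -
  obtain xs where xs: "f xs = fstar f" "(norm (xs - x n))\<^sup>2 \<le> D2" using closest by blast
  define w where "w = (1 - t) *\<^sub>R x n + t *\<^sub>R xs"
  have "f w \<le> (1 - t) * f (x n) + t * f xs" unfolding w_def using convex_onD[OF convex, of t "x n" xs] t by auto
  moreover have "w - x n = t *\<^sub>R (xs - x n)" unfolding w_def by (simp add: algebra_simps)
  then have "(norm (w - x n))\<^sup>2 = t\<^sup>2 * (norm (xs - x n))\<^sup>2" using t by (simp add: power_mult_distrib)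
  moreover have "t\<^sup>2 * (norm (xs - x n))\<^sup>2 \<le> t\<^sup>2 * D2" using xs(2) by (intro mult_left_mono) auto
  moreover have "phi n \<le> f w + \<rho>/2 * (norm (w - x n))\<^sup>2" using opt[of n w] fm_le[of n w] by linarith
  ultimately have "\<rho>/2 * (norm (w - x n))\<^sup>2 \<le> \<rho>/2 * (t\<^sup>2 * D2)" and "phi n \<le> f w + \<rho>/2 * (norm (w - x n))\<^sup>2" and "f w \<le> (1 - t) * f (x n) + t * f xs"
    using rho by (auto intro!: mult_left_mono)
  then have "phi n \<le> (1 - t) * f (x n) + t * f xs + \<rho>/2 * (t\<^sup>2 * D2)" by linarith
  then show ?thesis unfolding e_def h_def xs(1) by (simp add: algebra_simps)
qed

lemma e_nonneg: "e n \<ge> 0" using e_lower[of 0 n] by simp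

lemma Delta_ge: "f (x n) - fm n (z (Suc n)) \<ge> e n"
  unfolding e_def phi_def using rho by simp

lemma desc_step: "desc n \<Longrightarrow> h (Suc n) \<le> h n - \<beta> * e n"
proof -
  assume d: "desc n"
  then have "\<beta> * (f (x n) - fm n (z (Suc n))) \<le> f (x n) - f (z (Suc n))"
    unfolding desc_def is_descent_def by simp
  moreover have "\<beta> * e n \<le> \<beta> * (f (x n) - fm n (z (Suc n)))" using Delta_ge beta0 by (intro mult_left_mono) auto
  moreover have "f (x (Suc n)) = f (z (Suc n))" using R6 d by simp
  ultimately show ?thesis unfolding h_def by linarith
qed

lemma null_x: "\<not> desc n \<Longrightarrow> x (Suc n) = x n" using R6 by simp
lemma null_h: "\<not> desc n \<Longrightarrow> h (Suc n) = h n" using null_x unfolding h_def by simp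
lemma h_mono: "h (Suc n) \<le> h n"
  using desc_step[of n] null_h[of n] e_nonneg[of n] beta0 by (cases "desc n") (auto, smt (verit) mult_nonneg_nonneg)


lemma s_sub: "fm n y \<ge> fm n (z (Suc n)) + inner (\<rho> *\<^sub>R (x n - z (Suc n))) (y - z (Suc n))"
  by (rule prox_subgrad[OF R3 R5 rho])

lemma s_bound: "norm (\<rho> *\<^sub>R (x n - z (Suc n))) \<le> M"
proof (rule ccontr)
  define s where "s = \<rho> *\<^sub>R (x n - z (Suc n))"
  define zz where "zz = z (Suc n)"
  define \<delta> where "\<delta> = f zz - fm n zz"
  assume "\<not> norm (\<rho> *\<^sub>R (x n - z (Suc n))) \<le> M"
  then have sM: "norm s > M" unfolding s_def by simp
  have d0: "\<delta> \<ge> 0" unfolding \<delta>_def using fm_le by (simp add: le_diff_eq)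
  have key: "r * (norm s)\<^sup>2 \<le> \<delta> + M * (r * norm s)" if "r > 0" for r
  proof -
    have "fm n (zz + r *\<^sub>R s) \<ge> fm n zz + inner s (r *\<^sub>R s)" using s_sub[of n "zz + r *\<^sub>R s"] unfolding s_def zz_def by simp
    moreover have "fm n (zz + r *\<^sub>R s) \<le> f (zz + r *\<^sub>R s)" by (rule fm_le)
    moreover have "f (zz + r *\<^sub>R s) - f zz \<le> M * norm (r *\<^sub>R s)" using lip2[of "zz + r *\<^sub>R s" zz] by simp
    moreover have "inner s (r *\<^sub>R s) = r * (norm s)\<^sup>2" by (simp add: power2_norm_eq_inner)
    moreover have "M * norm (r *\<^sub>R s) = M * (r * norm s)" using that by simp
    ultimately show ?thesis unfolding \<delta>_def by linarith
  qed
  have sp: "norm s > 0" using sM Mpos by linarith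
  define r where "r = (\<delta> + 1) / (norm s * (norm s - M))"
  have rp: "r > 0" unfolding r_def using d0 sp sM by (intro divide_pos_pos mult_pos_pos) auto
  have "r * (norm s * (norm s - M)) = \<delta> + 1" unfolding r_def using sp sM by simp
  moreover have "r * (norm s * (norm s - M)) = r * (norm s)\<^sup>2 - M * (r * norm s)" by (simp add: algebra_simps power2_eq_square)
  ultimately show False using key[OF rp] by linarith
qed

lemma phi_gain:
  assumes nd: "\<not> desc n" and l: "0 \<le> l" "l \<le> 1"
  shows "phi (Suc n) \<ge> phi n + l * (f (z (Suc n)) - fm n (z (Suc n))) - 2 * l\<^sup>2 * M\<^sup>2 / \<rho>"
proof -
  define zz where "zz = z (Suc n)"
  define z' where "z' = z (Suc (Suc n))"
  define s where "s = \<rho> *\<^sub>R (x n - zz)"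
  define gz where "gz = g zz"
  define u where "u = z' - zz"
  define P where "P = inner u (zz - x n)"
  define \<delta> where "\<delta> = f zz - fm n zz"
  have xs: "x (Suc n) = x n" using null_x[OF nd] .
  have A: "fm (Suc n) z' \<ge> fm n zz + inner s u" using R9[OF nd, of z'] unfolding s_def zz_def u_def by simp
  have C: "fm (Suc n) z' \<ge> f zz + inner gz u" using R8[of n z'] unfolding gz_def zz_def u_def by simp
  have AC: "fm (Suc n) z' \<ge> (1 - l) * (fm n zz + inner s u) + l * (f zz + inner gz u)"
  proof -
    have "(1 - l) * (fm n zz + inner s u) \<le> (1 - l) * fm (Suc n) z'" using A l by (intro mult_left_mono) auto
    moreover have "l * (f zz + inner gz u) \<le> l * fm (Suc n) z'" using C l by (intro mult_left_mono) auto
    ultimately show ?thesis by (simp add: algebra_simps)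
  qed
  have nz: "(norm (z' - x n))\<^sup>2 = (norm u)\<^sup>2 + 2 * P + (norm (zz - x n))\<^sup>2"
  proof -
    have e1: "z' - x n = u + (zz - x n)" unfolding u_def by simp
    show ?thesis unfolding P_def e1 norm_sq_add by simp
  qed
  have su: "inner s u = - \<rho> * P"
  proof -
    have "inner (x n - zz) u = - inner u (zz - x n)"
      by (metis inner_commute inner_minus_left minus_diff_eq)
    then show ?thesis unfolding s_def P_def by (simp add: inner_scaleR_left)
  qed
  have vu: "inner (gz - s) u = inner gz u - inner s u" by (simp add: inner_diff_left)
  have phiS: "phi (Suc n) = fm (Suc n) z' + \<rho>/2 * (norm (z' - x n))\<^sup>2"
    unfolding phi_def z'_def xs ..
  have phin: "phi n = fm n zz + \<rho>/2 * (norm (zz - x n))\<^sup>2" unfolding phi_def zz_def ..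
  have q: "l * inner (gz - s) u + \<rho>/2 * (norm u)\<^sup>2 \<ge> - (l\<^sup>2 * (norm (gz - s))\<^sup>2) / (2*\<rho>)"
    by (rule quad_lower[OF rho])
  have "norm (gz - s) \<le> 2 * M"
    using norm_triangle_ineq4[of gz s] g_bound[of zz] s_bound[of n] unfolding gz_def s_def zz_def by linarith
  then have "(norm (gz - s))\<^sup>2 \<le> (2*M)\<^sup>2" by (intro power_mono) auto
  then have "l\<^sup>2 * (norm (gz - s))\<^sup>2 \<le> l\<^sup>2 * (2*M)\<^sup>2" by (intro mult_left_mono) auto
  then have "(l\<^sup>2 * (norm (gz - s))\<^sup>2) / (2*\<rho>) \<le> (l\<^sup>2 * (2*M)\<^sup>2) / (2*\<rho>)"
    using rho by (intro divide_right_mono) auto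
  then have q2: "- (l\<^sup>2 * (norm (gz - s))\<^sup>2) / (2*\<rho>) \<ge> - (l\<^sup>2 * (2*M)\<^sup>2) / (2*\<rho>)"
    by simp
  have "- (l\<^sup>2 * (2*M)\<^sup>2) / (2*\<rho>) = - 2 * l\<^sup>2 * M\<^sup>2 / \<rho>" using rho by (simp add: field_simps power2_eq_square)
  moreover have "phi (Suc n) \<ge> phi n + l * \<delta> + (l * inner (gz - s) u + \<rho>/2 * (norm u)\<^sup>2)"
  proof -
    have "phi (Suc n) \<ge> (1 - l) * (fm n zz + inner s u) + l * (f zz + inner gz u) + \<rho>/2 * ((norm u)\<^sup>2 + 2 * P + (norm (zz - x n))\<^sup>2)"
      unfolding phiS nz using AC by linarith
    moreover have "(1 - l) * (fm n zz + inner s u) + l * (f zz + inner gz u) + \<rho>/2 * ((norm u)\<^sup>2 + 2 * P + (norm (zz - x n))\<^sup>2)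
       = phi n + l * \<delta> + (l * inner (gz - s) u + \<rho>/2 * (norm u)\<^sup>2)"
      unfolding phin \<delta>_def vu su by (simp add: algebra_simps)
    ultimately show ?thesis by linarith
  qed
  ultimately show ?thesis using q q2 unfolding \<delta>_def zz_def by linarith
qed

lemma phi_null_mono: "\<not> desc n \<Longrightarrow> phi (Suc n) \<ge> phi n"
  using phi_gain[of n 0] by simp

lemma lin_lower: "f u + inner (g u) w + \<rho>/2 * (norm w)\<^sup>2 \<ge> f u - M\<^sup>2 / (2 * \<rho>)"
proof -
  have "1 * inner (g u) w + \<rho>/2 * (norm w)\<^sup>2 \<ge> - (1\<^sup>2 * (norm (g u))\<^sup>2) / (2*\<rho>)" by (rule quad_lower[OF rho])
  moreover have "(norm (g u))\<^sup>2 \<le> M\<^sup>2" using g_bound[of u] by (intro power_mono) auto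
  then have "(norm (g u))\<^sup>2 / (2*\<rho>) \<le> M\<^sup>2 / (2*\<rho>)" using rho by (intro divide_right_mono) auto
  ultimately show ?thesis by simp
qed

lemma e_upper: "e n \<le> M\<^sup>2 / (2 * \<rho>)"
proof (induction n)
  case 0
  have "phi 0 = f (x 0) + inner (g (x 0)) (z 1 - x 0) + \<rho>/2 * (norm (z 1 - x 0))\<^sup>2" unfolding phi_def R2 by simp
  then show ?case using lin_lower[of "x 0" "z 1 - x 0"] unfolding e_def by linarith
next
  case (Suc n)
  show ?case
  proof (cases "desc n")
    case True
    then have xs: "x (Suc n) = z (Suc n)" using R6 by simp
    have "phi (Suc n) \<ge> f (z (Suc n)) + inner (g (z (Suc n))) (z (Suc (Suc n)) - z (Suc n)) + \<rho>/2 * (norm (z (Suc (Suc n)) - z (Suc n)))\<^sup>2"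
      unfolding phi_def xs using R8[of n "z (Suc (Suc n))"] by simp
    then show ?thesis using lin_lower[of "z (Suc n)" "z (Suc (Suc n)) - z (Suc n)"] unfolding e_def xs by linarith
  next
    case False
    then show ?thesis using Suc phi_null_mono[OF False] null_x[OF False] unfolding e_def by simp
  qed
qed


lemma e_null: assumes nd: "\<not> desc n" shows "e (Suc n) \<le> e n - c * (e n)\<^sup>2"
proof -
  define zz where "zz = z (Suc n)"
  define \<Delta> where "\<Delta> = f (x n) - fm n zz"
  define \<delta> where "\<delta> = f zz - fm n zz"
  define l where "l = \<rho> * (1 - \<beta>) * e n / (4 * M\<^sup>2)"
  have M2: "M\<^sup>2 > 0" using Mpos by simp
  have "\<not> \<beta> * \<Delta> \<le> f (x n) - f zz" using nd unfolding desc_def is_descent_def \<Delta>_def zz_def by simp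
  then have "\<delta> > (1 - \<beta>) * \<Delta>" unfolding \<delta>_def \<Delta>_def by (simp add: algebra_simps)
  moreover have "(1 - \<beta>) * \<Delta> \<ge> (1 - \<beta>) * e n" using Delta_ge[of n] beta1 unfolding \<Delta>_def zz_def by (intro mult_left_mono) auto
  ultimately have dl: "\<delta> \<ge> (1 - \<beta>) * e n" by linarith
  have l0: "0 \<le> l" unfolding l_def using rho beta1 e_nonneg[of n] M2 by simp
  have "l \<le> \<rho> * (1 - \<beta>) * (M\<^sup>2 / (2 * \<rho>)) / (4 * M\<^sup>2)"
    unfolding l_def using e_upper[of n] rho beta1 M2 by (intro divide_right_mono mult_left_mono) auto
  also have "\<dots> = (1 - \<beta>) / 8" using rho M2 by (simp add: field_simps)
  also have "\<dots> \<le> 1" using beta0 by simp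
  finally have l1: "l \<le> 1" .
  have g: "phi (Suc n) \<ge> phi n + l * \<delta> - 2 * l\<^sup>2 * M\<^sup>2 / \<rho>"
    using phi_gain[OF nd l0 l1] unfolding \<delta>_def zz_def .
  have "l * \<delta> \<ge> l * ((1 - \<beta>) * e n)" using dl l0 by (intro mult_left_mono)
  moreover have "l * ((1 - \<beta>) * e n) - 2 * l\<^sup>2 * M\<^sup>2 / \<rho> = c * (e n)\<^sup>2"
  proof -
    have "M \<noteq> 0" using Mpos by simp
    then show ?thesis unfolding l_def c_def using rho by (simp add: field_simps power2_eq_square)
  qed
  ultimately have "phi (Suc n) \<ge> phi n + c * (e n)\<^sup>2" using g by linarith
  then show ?thesis unfolding e_def using null_x[OF nd] by simp
qed

lemma c_pos: "c > 0" unfolding c_def using rho beta1 Mpos by simp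

lemma inv_step: assumes "\<not> desc n" "e n > 0" "e (Suc n) > 0" shows "1 / e n + c \<le> 1 / e (Suc n)"
  using recip_step[OF assms(2,3) e_null[OF assms(1)]] c_pos by simp

lemma e_ge_half: "h n \<ge> \<rho> * D2 \<Longrightarrow> e n \<ge> h n / 2"
  using e_lower[of 1 n] by simp

lemma e_ge_sq: assumes "0 < h n" "h n < \<rho> * D2" shows "e n \<ge> (h n)\<^sup>2 / (2 * \<rho> * D2)"
proof -
  have rD: "\<rho> * D2 > 0" using rho D2_pos by simp
  have "e n \<ge> (h n / (\<rho> * D2)) * h n - \<rho> * (h n / (\<rho> * D2))\<^sup>2 * D2 / 2"
    using assms rD by (intro e_lower) auto
  also have "(h n / (\<rho> * D2)) * h n - \<rho> * (h n / (\<rho> * D2))\<^sup>2 * D2 / 2 = (h n)\<^sup>2 / (2 * \<rho> * D2)"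
    using rho D2_pos by (simp add: field_simps power2_eq_square)
  finally show ?thesis .
qed


definition q where "q = 1 - \<beta> / 2"
definition a where "a = \<beta> / (2 * \<rho> * D2)"
definition P1 where "P1 n = {d. d < n \<and> (desc d \<and> h d \<ge> \<rho> * D2)}"
definition P2 where "P2 n = {d. d < n \<and> (desc d \<and> h d < \<rho> * D2)}"
definition DS where "DS n = {d. d < n \<and> desc d}"
definition NS where "NS n = {d. d < n \<and> \<not> desc d}"
definition W where "W n = (\<Sum>d\<in>DS n. 1 / e d)"
definition S1 where "S1 n = (\<Sum>d\<in>P1 n. 1 / h d)"
definition G where "G n = (\<forall>j<n. h j > \<epsilon>)"

lemma rD_pos: "\<rho> * D2 > 0" using rho D2_pos by simp

lemma e_pos: "h n > 0 \<Longrightarrow> e n > 0"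
proof -
  assume hp: "h n > 0"
  show "e n > 0"
  proof (cases "h n \<ge> \<rho> * D2")
    case True then show ?thesis using e_ge_half[OF True] hp by linarith
  next
    case False
    then have "e n \<ge> (h n)\<^sup>2 / (2 * \<rho> * D2)" using e_ge_sq hp by simp
    moreover have "(h n)\<^sup>2 / (2 * \<rho> * D2) > 0" using hp rho D2_pos by simp
    ultimately show ?thesis by linarith
  qed
qed

lemma q_props: "0 < q" "q < 1" using beta0 beta1 unfolding q_def by auto

lemma phase1_step: assumes "desc n" "h n \<ge> \<rho> * D2" shows "h (Suc n) \<le> q * h n"
proof -
  have "\<beta> * (h n / 2) \<le> \<beta> * e n" using e_ge_half[OF assms(2)] beta0 by (intro mult_left_mono) auto
  then show ?thesis using desc_step[OF assms(1)] unfolding q_def by (simp add: algebra_simps)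
qed

lemma phase2_step: assumes "desc n" "0 < h n" "h n < \<rho> * D2" shows "h (Suc n) \<le> h n - a * (h n)\<^sup>2"
proof -
  have "\<beta> * ((h n)\<^sup>2 / (2 * \<rho> * D2)) \<le> \<beta> * e n" using e_ge_sq[OF assms(2,3)] beta0 by (intro mult_left_mono) auto
  moreover have "\<beta> * ((h n)\<^sup>2 / (2 * \<rho> * D2)) = a * (h n)\<^sup>2" unfolding a_def by simp
  ultimately show ?thesis using desc_step[OF assms(1)] by linarith
qed

lemma I_p: "h n \<le> q ^ card (P1 n) * h 0 \<and> (card (P1 n) > 0 \<longrightarrow> \<rho> * D2 \<le> q ^ (card (P1 n) - 1) * h 0)"
proof (induction n)
  case 0 then show ?case unfolding P1_def by simp
next
  case (Suc n)
  have cS: "card (P1 (Suc n)) = card (P1 n) + (if desc n \<and> h n \<ge> \<rho> * D2 then 1 else 0)"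
    unfolding P1_def by (rule card_Suc_filter)
  show ?case
  proof (cases "desc n \<and> h n \<ge> \<rho> * D2")
    case True
    have "h (Suc n) \<le> q * h n" using phase1_step True by blast
    also have "\<dots> \<le> q * (q ^ card (P1 n) * h 0)" using Suc.IH q_props by (intro mult_left_mono) auto
    finally have "h (Suc n) \<le> q ^ card (P1 (Suc n)) * h 0" using cS True by simp
    moreover have "\<rho> * D2 \<le> q ^ (card (P1 (Suc n)) - 1) * h 0" using cS True Suc.IH by simp
    ultimately show ?thesis by blast
  next
    case False
    have same: "card (P1 (Suc n)) = card (P1 n)" using cS False by simp
    have "h (Suc n) \<le> q ^ card (P1 n) * h 0" using Suc.IH h_mono[of n] by linarith
    with Suc.IH show ?thesis unfolding same by simp
  qed
qed

lemma I_m: "G n \<Longrightarrow> card (P2 n) > 0 \<longrightarrow> h n < \<rho> * D2 \<and> a * card (P2 n) < 1/\<epsilon> - 1/(\<rho> * D2) + a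
   \<and> (h n > 0 \<longrightarrow> a * card (P2 n) \<le> 1 / h n - 1/(\<rho> * D2))"
proof (induction n)
  case 0 then show ?case unfolding P2_def by simp
next
  case (Suc n)
  have Gn: "G n" and hn: "h n > \<epsilon>" using Suc.prems unfolding G_def by auto
  have hp: "h n > 0" using hn eps0 by linarith
  have cS: "card (P2 (Suc n)) = card (P2 n) + (if desc n \<and> h n < \<rho> * D2 then 1 else 0)"
    unfolding P2_def by (rule card_Suc_filter)
  note IH = Suc.IH[OF Gn]
  show ?case
  proof (cases "desc n \<and> h n < \<rho> * D2")
    case True
    have X: "a * card (P2 n) \<le> 1 / h n - 1/(\<rho> * D2)"
    proof (cases "card (P2 n) > 0")
      case True then show ?thesis using IH hp by blast
    next
      case False
      have "1/(\<rho> * D2) \<le> 1 / h n" using hp \<open>desc n \<and> h n < \<rho> * D2\<close> by (intro divide_left_mono) auto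
      then show ?thesis using False by simp
    qed
    have m1: "a * card (P2 (Suc n)) = a * card (P2 n) + a" using cS True by (simp add: algebra_simps)
    have "1 / h n < 1 / \<epsilon>" using hn eps0 by (intro divide_strict_left_mono) auto
    then have A: "a * card (P2 (Suc n)) < 1/\<epsilon> - 1/(\<rho> * D2) + a" using m1 X by linarith
    have B: "a * card (P2 (Suc n)) \<le> 1 / h (Suc n) - 1/(\<rho> * D2)" if "h (Suc n) > 0"
    proof -
      have "a \<ge> 0" unfolding a_def using beta0 rho D2_pos by simp
      then have "1 / h n + a \<le> 1 / h (Suc n)" using recip_step[OF hp that phase2_step[OF _ hp]] True by blast
      then show ?thesis using m1 X by linarith
    qed
    have "h (Suc n) < \<rho> * D2" using h_mono[of n] True by linarith
    then show ?thesis using A B by blast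
  next
    case False
    have same: "card (P2 (Suc n)) = card (P2 n)" using cS False by simp
    show ?thesis
    proof (cases "card (P2 n) > 0")
      case True
      then have I: "h n < \<rho> * D2" "a * card (P2 n) < 1/\<epsilon> - 1/(\<rho> * D2) + a" "a * card (P2 n) \<le> 1 / h n - 1/(\<rho> * D2)"
        using IH hp by auto
      have "1 / h n \<le> 1 / h (Suc n)" if "h (Suc n) > 0" using h_mono[of n] that by (intro divide_left_mono) auto
      then show ?thesis using I same h_mono[of n] by force
    next
      case False then show ?thesis using same by simp
    qed
  qed
qed

lemma I_S: "G n \<Longrightarrow> S1 n \<le> 2 / (\<beta> * (\<rho> * D2)) \<and> (h n > 0 \<longrightarrow> S1 n \<le> 2 * q / (\<beta> * h n))"
proof (induction n)
  case 0 then show ?case unfolding S1_def P1_def using beta0 rD_pos q_props by simp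
next
  case (Suc n)
  have Gn: "G n" and hn: "h n > \<epsilon>" using Suc.prems unfolding G_def by auto
  have hp: "h n > 0" using hn eps0 by linarith
  have sS: "S1 (Suc n) = S1 n + (if desc n \<and> h n \<ge> \<rho> * D2 then 1 / h n else 0)"
    unfolding S1_def P1_def by (rule sum_Suc_filter)
  note IH = Suc.IH[OF Gn]
  show ?case
  proof (cases "desc n \<and> h n \<ge> \<rho> * D2")
    case True
    have "S1 (Suc n) \<le> 2 * q / (\<beta> * h n) + 1 / h n" using sS True IH hp by simp
    also have "\<dots> = 2 / (\<beta> * h n)" unfolding q_def using beta0 hp by (simp add: field_simps)
    finally have A: "S1 (Suc n) \<le> 2 / (\<beta> * h n)" .
    have "2 / (\<beta> * h n) \<le> 2 / (\<beta> * (\<rho> * D2))" using True beta0 rD_pos rho D2_pos hp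
      by (intro divide_left_mono mult_left_mono mult_pos_pos) auto
    moreover have "2 / (\<beta> * h n) \<le> 2 * q / (\<beta> * h (Suc n))" if "h (Suc n) > 0"
    proof -
      have "h (Suc n) \<le> q * h n" using phase1_step True by blast
      then show ?thesis using that beta0 hp q_props by (simp add: field_simps)
    qed
    ultimately show ?thesis using A by force
  next
    case False
    have same: "S1 (Suc n) = S1 n" using sS False by simp
    have "2 * q / (\<beta> * h n) \<le> 2 * q / (\<beta> * h (Suc n))" if "h (Suc n) > 0"
      using h_mono[of n] that beta0 q_props by (intro divide_left_mono mult_left_mono mult_pos_pos) auto
    then show ?thesis using IH same hp by force
  qed
qed

lemma I_J: "G n \<Longrightarrow> c * card (NS n) \<le> W n + (if n = 0 then 0 else if desc (n - 1) then 0 else 1 / e n)"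
proof (induction n)
  case 0 then show ?case unfolding NS_def W_def DS_def by simp
next
  case (Suc n)
  have Gn: "G n" and hn: "h n > \<epsilon>" using Suc.prems unfolding G_def by auto
  have ep: "e n > 0" using e_pos hn eps0 by simp
  have cS: "card (NS (Suc n)) = card (NS n) + (if \<not> desc n then 1 else 0)"
    unfolding NS_def by (rule card_Suc_filter)
  have wS: "W (Suc n) = W n + (if desc n then 1 / e n else 0)"
    unfolding W_def DS_def by (rule sum_Suc_filter)
  note IH = Suc.IH[OF Gn]
  have IH': "c * card (NS n) \<le> W n + 1 / e n"
    using IH ep by (smt (verit) divide_pos_pos)
  show ?case
  proof (cases "desc n")
    case True then show ?thesis using cS wS IH' by simp
  next
    case False
    have "e (Suc n) > 0" using e_pos null_h[OF False] hn eps0 by simp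
    then have "1 / e n + c \<le> 1 / e (Suc n)" using inv_step[OF False ep] by blast
    then show ?thesis using cS wS IH' False by (simp add: algebra_simps)
  qed
qed


lemma fin_sets: "finite (DS n)" "finite (NS n)" "finite (P1 n)" "finite (P2 n)"
  unfolding DS_def NS_def P1_def P2_def by auto

lemma DS_split: "DS n = P1 n \<union> P2 n" "P1 n \<inter> P2 n = {}"
  unfolding DS_def P1_def P2_def by auto

lemma card_DS: "card (DS n) = card (P1 n) + card (P2 n)"
  using card_Un_disjoint[OF fin_sets(3,4) DS_split(2)] DS_split(1) by simp

lemma W_split: "W n = (\<Sum>d\<in>P1 n. 1 / e d) + (\<Sum>d\<in>P2 n. 1 / e d)"
  unfolding W_def using sum.union_disjoint[OF fin_sets(3,4) DS_split(2)] DS_split(1) by simp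

lemma card_DS_NS: "card (DS n) + card (NS n) = n"
proof -
  have "DS n \<union> NS n = {..<n}" "DS n \<inter> NS n = {}" unfolding DS_def NS_def by auto
  then show ?thesis using card_Un_disjoint[OF fin_sets(1,2)] by (metis card_lessThan)
qed

lemma h0_pos: "h 0 > 0" using eps0 eps1 unfolding h_def by linarith

lemma exists_good: "\<exists>n. h n \<le> \<epsilon>"
proof (rule ccontr)
  assume "\<not> (\<exists>n. h n \<le> \<epsilon>)"
  then have all: "h n > \<epsilon>" for n by (meson not_le)
  then have Gall: "G n" for n unfolding G_def by simp
  define t0 where "t0 = min 1 (\<epsilon> / (\<rho> * D2))"
  define l0 where "l0 = t0 * \<epsilon> / 2"
  have t0: "0 < t0" "t0 \<le> 1" "\<rho> * t0 * D2 \<le> \<epsilon>"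
    unfolding t0_def using eps0 rD_pos rho D2_pos by (auto simp: field_simps min_def)
  have l0p: "l0 > 0" unfolding l0_def using t0 eps0 by simp
  have el: "e n \<ge> l0" for n
  proof -
    have "e n \<ge> t0 * h n - \<rho> * t0\<^sup>2 * D2 / 2" using e_lower t0 by simp
    moreover have "t0 * \<epsilon> \<le> t0 * h n" using all[of n] t0 by (intro mult_left_mono) auto
    moreover have "t0 * (\<rho> * t0 * D2) \<le> t0 * \<epsilon>" using t0 by (intro mult_left_mono) auto
    moreover have "\<rho> * t0\<^sup>2 * D2 = t0 * (\<rho> * t0 * D2)" by (simp add: power2_eq_square)
    ultimately show ?thesis unfolding l0_def by linarith
  qed
  have hd: "h n \<le> h 0 - \<beta> * l0 * card (DS n)" for n
  proof (induction n)
    case 0 then show ?case unfolding DS_def by simp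
  next
    case (Suc n)
    have cS: "card (DS (Suc n)) = card (DS n) + (if desc n then 1 else 0)"
      unfolding DS_def by (rule card_Suc_filter)
    show ?case
    proof (cases "desc n")
      case True
      have "\<beta> * l0 \<le> \<beta> * e n" using el beta0 by (intro mult_left_mono) auto
      then show ?thesis using desc_step[OF True] Suc.IH cS True by (simp add: algebra_simps)
    next
      case False then show ?thesis using null_h[OF False] Suc.IH cS by simp
    qed
  qed
  have ie: "1 / e d \<le> 1 / l0" for d using el[of d] l0p by (intro frac_le) auto
  define C1 where "C1 = h 0 / (\<beta> * l0)"
  have bl: "\<beta> * l0 > 0" using beta0 l0p by simp
  have cd: "card (DS n) \<le> C1" for n
  proof -
    have "\<beta> * l0 * card (DS n) \<le> h 0" using hd[of n] all[of n] eps0 by linarith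
    then show ?thesis unfolding C1_def using bl by (simp add: field_simps mult.commute)
  qed
  have Wb: "W n \<le> C1 * (1 / l0)" for n
  proof -
    have "W n \<le> card (DS n) * (1 / l0)" unfolding W_def
      by (rule sum_bounded_above) (rule ie)
    also have "\<dots> \<le> C1 * (1 / l0)" using cd[of n] l0p by (intro mult_right_mono) auto
    finally show ?thesis .
  qed
  have nb: "c * card (NS n) \<le> C1 * (1 / l0) + 1 / l0" for n
  proof -
    have "(if n = 0 then 0 else if desc (n - 1) then 0 else 1 / e n) \<le> 1 / l0"
      using ie[of n] l0p by auto
    then show ?thesis using I_J[OF Gall, of n] Wb[of n] by linarith
  qed
  define B where "B = C1 + (C1 * (1 / l0) + 1 / l0) / c"
  have "real n \<le> B" for n
  proof -
    have "card (NS n) \<le> (C1 * (1 / l0) + 1 / l0) / c" using nb[of n] c_pos by (simp add: field_simps mult.commute)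
    then show ?thesis using cd[of n] card_DS_NS[of n] unfolding B_def
      by (metis (mono_tags, lifting) add_mono of_nat_add)
  qed
  from this[of "nat \<lceil>B\<rceil> + 1"] show False by linarith
qed


definition L where "L = 2 * ln (h 0 / (\<rho> * D2)) / \<beta>"

lemma log_aux: "real j * (\<beta> / 2) \<le> ln (h 0) - ln (q ^ j * h 0) "
proof -
  have "ln (q ^ j * h 0) = real j * ln q + ln (h 0)"
    using q_props h0_pos by (simp add: ln_mult_pos ln_realpow)
  moreover have "ln q \<le> - (\<beta> / 2)" using ln_le_minus_one[OF q_props(1)] unfolding q_def by simp
  then have "real j * ln q \<le> real j * (- (\<beta> / 2))" by (intro mult_left_mono) auto
  ultimately show ?thesis by simp
qed

lemma log_bound: assumes "\<rho> * D2 \<le> q ^ j * h 0" shows "real j \<le> L"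
proof -
  have "ln (\<rho> * D2) \<le> ln (q ^ j * h 0)" using assms rD_pos by simp
  then have "real j * (\<beta> / 2) \<le> ln (h 0 / (\<rho> * D2))"
    using log_aux[of j] h0_pos rD_pos by (simp add: ln_divide_pos)
  then show ?thesis unfolding L_def using beta0 by (simp add: field_simps)
qed

lemma log_bound_strict: assumes "\<rho> * D2 < q ^ j * h 0" shows "real j < L"
proof -
  have "ln (\<rho> * D2) < ln (q ^ j * h 0)" using assms rD_pos by simp
  then have "real j * (\<beta> / 2) < ln (h 0 / (\<rho> * D2))"
    using log_aux[of j] h0_pos rD_pos by (simp add: ln_divide_pos)
  then show ?thesis unfolding L_def using beta0 by (simp add: field_simps)
qed


lemma main: "\<exists>K. h K \<le> \<epsilon> \<and> (\<forall>k<K. h k > \<epsilon>) \<and>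
   real (card (DS K)) \<le> 2 * \<rho> * D2 / (\<beta> * \<epsilon>) + real_of_int (max \<lceil>L\<rceil> 0) \<and>
   real (card (NS K)) \<le> 48 * \<rho> * M\<^sup>2 * D2\<^sup>2 / (\<beta> * (1 - \<beta>)\<^sup>2 * \<epsilon> ^ 3)
          + 32 * M\<^sup>2 / (\<beta> * (1 - \<beta>)\<^sup>2 * \<rho>\<^sup>2 * D2)"
proof -
  define K where "K = (LEAST n. h n \<le> \<epsilon>)"
  have hK: "h K \<le> \<epsilon>" unfolding K_def by (rule LeastI_ex[OF exists_good])
  have bef: "h k > \<epsilon>" if "k < K" for k using not_less_Least[OF that[unfolded K_def]] by simp
  have GK: "G K" unfolding G_def using bef by blast
  define R where "R = 2 * \<rho> * D2 / (\<beta> * \<epsilon>)"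
  define Ecl where "Ecl = real_of_int (max \<lceil>L\<rceil> 0)"
  define N0 where "N0 = 48 * \<rho> * M\<^sup>2 * D2\<^sup>2 / (\<beta> * (1 - \<beta>)\<^sup>2 * \<epsilon> ^ 3) + 32 * M\<^sup>2 / (\<beta> * (1 - \<beta>)\<^sup>2 * \<rho>\<^sup>2 * D2)"
  have R0: "R > 0" unfolding R_def using rho D2_pos beta0 eps0 by simp
  have E0: "Ecl \<ge> 0" unfolding Ecl_def by simp
  have N00: "N0 \<ge> 0" unfolding N0_def using rho D2_pos beta0 beta1 eps0 by simp
  have b1: "(1 - \<beta>)\<^sup>2 > 0" using beta1 by simp
  have a0: "a > 0" unfolding a_def using beta0 rho D2_pos by simp
  have Ra: "R = 1 / (a * \<epsilon>)" unfolding R_def a_def using rho D2_pos beta0 eps0 by (simp add: field_simps)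
  show ?thesis
  proof (cases K)
    case 0
    then have "DS K = {}" "NS K = {}" unfolding DS_def NS_def by auto
    then show ?thesis using hK bef R0 E0 N00 unfolding R_def Ecl_def N0_def by auto
  next
    case (Suc k)
    have hk: "h k > \<epsilon>" using bef Suc by simp
    have hkp: "h k > 0" using hk eps0 by linarith
    have dk: "desc k"
    proof (rule ccontr)
      assume "\<not> desc k" then have "h K = h k" using null_h Suc by simp
      then show False using hK hk by linarith
    qed
    have Gk: "G k" using GK Suc unfolding G_def by simp
    have cP1: "card (P1 K) = card (P1 k) + (if h k \<ge> \<rho> * D2 then 1 else 0)"
      unfolding P1_def Suc using card_Suc_filter[of k "\<lambda>d. desc d \<and> h d \<ge> \<rho> * D2"] dk by simp
    have cP2: "card (P2 K) = card (P2 k) + (if h k < \<rho> * D2 then 1 else 0)"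
      unfolding P2_def Suc using card_Suc_filter[of k "\<lambda>d. desc d \<and> h d < \<rho> * D2"] dk by simp
    have mb: "real (card (P2 K)) \<le> R \<and> (h k < \<rho> * D2 \<longrightarrow> real (card (P2 K)) + 1 < R)"
    proof (cases "h k \<ge> \<rho> * D2")
      case True
      have "card (P2 k) = 0" using I_m[OF Gk] True by (meson linorder_not_le neq0_conv)
      then show ?thesis using cP2 True R0 by simp
    next
      case False
      then have pos: "card (P2 K) > 0" using cP2 by simp
      have A: "a * card (P2 K) < 1/\<epsilon> - 1/(\<rho> * D2) + a" using I_m[OF GK] pos by blast
      have "1/(\<rho> * D2) = 2 * a / \<beta>" unfolding a_def using beta0 rho D2_pos by (simp add: field_simps)
      moreover have "2 * a / \<beta> \<ge> 2 * a" using a0 beta0 beta1 by (simp add: field_simps)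
      ultimately have "a * (card (P2 K) + 1) < 1 / \<epsilon>" using A by (simp add: algebra_simps)
      then have "(card (P2 K) + 1) < R" unfolding Ra using a0 eps0 by (simp add: field_simps)
      then show ?thesis by simp
    qed
    have descb: "real (card (DS K)) \<le> R + Ecl"
    proof (cases "h k \<ge> \<rho> * D2")
      case True
      define j where "j = card (P1 k)"
      have pK: "card (P1 K) = j + 1" using cP1 True unfolding j_def by simp
      have "card (P2 k) = 0" using I_m[OF Gk] True by (meson linorder_not_le neq0_conv)
      then have mK: "card (P2 K) = 0" using True cP2 by simp
      have hq: "h k \<le> q ^ j * h 0" using I_p[of k] unfolding j_def by blast
      have "real j + 1 \<le> R + Ecl"
      proof (cases "\<epsilon> \<le> 2 * \<rho> * D2 / \<beta>")
        case True
        have "R \<ge> 1" unfolding R_def using True eps0 beta0 by (simp add: field_simps)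
        moreover have "real j \<le> L" using log_bound[of j] \<open>h k \<ge> \<rho> * D2\<close> hq by linarith
        then have "real j \<le> Ecl" unfolding Ecl_def by linarith
        ultimately show ?thesis by linarith
      next
        case False
        have "2 / \<beta> \<ge> 1" using beta0 beta1 by (simp add: field_simps)
        then have "\<rho> * D2 * 1 \<le> \<rho> * D2 * (2 / \<beta>)" using rD_pos by (intro mult_left_mono) auto
        then have "2 * \<rho> * D2 / \<beta> \<ge> \<rho> * D2" by (simp add: mult.commute mult.left_commute)
        then have "\<rho> * D2 < q ^ j * h 0" using False hk hq by linarith
        then have "real j < L" by (rule log_bound_strict)
        then have "real j < of_int \<lceil>L\<rceil>" by linarith
        then have "int j < \<lceil>L\<rceil>" by linarith
        then have "real j + 1 \<le> Ecl" unfolding Ecl_def by linarith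
        then show ?thesis using R0 by linarith
      qed
      then show ?thesis using card_DS[of K] pK mK by simp
    next
      case False
      define j where "j = card (P1 K)"
      have mK: "real (card (P2 K)) + 1 < R" using mb False by (simp add: not_le)
      have "real j \<le> Ecl + 1"
      proof (cases "j = 0")
        case True then show ?thesis using E0 by simp
      next
        case False
        then have "\<rho> * D2 \<le> q ^ (j - 1) * h 0" using I_p[of K] unfolding j_def by blast
        then have "real (j - 1) \<le> L" by (rule log_bound)
        then have "real j \<le> L + 1" using False by (simp add: of_nat_diff)
        then show ?thesis unfolding Ecl_def by linarith
      qed
      then show ?thesis using card_DS[of K] mK unfolding j_def by simp
    qed
    have J: "c * card (NS K) \<le> W K" using I_J[OF GK] dk Suc by simp
    have s1: "(\<Sum>d\<in>P1 K. 1 / e d) \<le> 4 / (\<beta> * (\<rho> * D2))"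
    proof -
      have "(\<Sum>d\<in>P1 K. 1 / e d) \<le> (\<Sum>d\<in>P1 K. 2 * (1 / h d))"
      proof (rule sum_mono)
        fix d assume "d \<in> P1 K"
        then have "h d \<ge> \<rho> * D2" "h d > \<epsilon>" using bef unfolding P1_def by auto
        then have "e d \<ge> h d / 2" "h d / 2 > 0" using e_ge_half eps0 by auto
        then have "1 / e d \<le> 1 / (h d / 2)" by (intro frac_le) auto
        then show "1 / e d \<le> 2 * (1 / h d)" by simp
      qed
      also have "\<dots> = 2 * S1 K" unfolding S1_def by (simp add: sum_distrib_left)
      also have "\<dots> \<le> 2 * (2 / (\<beta> * (\<rho> * D2)))" using I_S[OF GK] by simp
      finally show ?thesis by simp
    qed
    have s2: "(\<Sum>d\<in>P2 K. 1 / e d) \<le> card (P2 K) * (2 * \<rho> * D2 / \<epsilon>\<^sup>2)"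
    proof (rule sum_bounded_above)
      fix d assume "d \<in> P2 K"
      then have hd: "h d < \<rho> * D2" "h d > \<epsilon>" using bef unfolding P2_def by auto
      then have "e d \<ge> (h d)\<^sup>2 / (2 * \<rho> * D2)" using e_ge_sq eps0 by auto
      moreover have "(h d)\<^sup>2 \<ge> \<epsilon>\<^sup>2" using hd eps0 by (intro power_mono) auto
      then have "(h d)\<^sup>2 / (2 * \<rho> * D2) \<ge> \<epsilon>\<^sup>2 / (2 * \<rho> * D2)" using rho D2_pos by (intro divide_right_mono) auto
      ultimately have "e d \<ge> \<epsilon>\<^sup>2 / (2 * \<rho> * D2)" by linarith
      moreover have "\<epsilon>\<^sup>2 / (2 * \<rho> * D2) > 0" using eps0 rho D2_pos by simp
      ultimately have "1 / e d \<le> 1 / (\<epsilon>\<^sup>2 / (2 * \<rho> * D2))" by (intro frac_le) auto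
      then show "1 / e d \<le> 2 * \<rho> * D2 / \<epsilon>\<^sup>2" by simp
    qed
    have "card (P2 K) * (2 * \<rho> * D2 / \<epsilon>\<^sup>2) \<le> R * (2 * \<rho> * D2 / \<epsilon>\<^sup>2)"
      using mb eps0 rho D2_pos by (intro mult_right_mono) auto
    then have "c * card (NS K) \<le> 4 / (\<beta> * (\<rho> * D2)) + R * (2 * \<rho> * D2 / \<epsilon>\<^sup>2)"
      using J W_split[of K] s1 s2 by linarith
    then have "card (NS K) \<le> (4 / (\<beta> * (\<rho> * D2)) + R * (2 * \<rho> * D2 / \<epsilon>\<^sup>2)) / c"
      using c_pos by (simp add: field_simps mult.commute)
    also have "\<dots> = 32 * \<rho> * M\<^sup>2 * D2\<^sup>2 / (\<beta> * (1 - \<beta>)\<^sup>2 * \<epsilon> ^ 3) + 32 * M\<^sup>2 / (\<beta> * (1 - \<beta>)\<^sup>2 * \<rho>\<^sup>2 * D2)"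
    proof -
      have nz: "\<beta> \<noteq> 0" "1 - \<beta> \<noteq> 0" "\<rho> \<noteq> 0" "D2 \<noteq> 0" "\<epsilon> \<noteq> 0" "M \<noteq> 0"
        using beta0 beta1 rho D2_pos eps0 Mpos by auto
      have "(1 - \<beta>)\<^sup>2 \<noteq> 0" using nz by simp
      then show ?thesis unfolding R_def c_def using final_arith[of \<beta> \<rho> D2 \<epsilon> M "(1 - \<beta>)\<^sup>2"] nz by simp
    qed
    also have "\<dots> \<le> N0" unfolding N0_def
    proof -
      have "32 * \<rho> * M\<^sup>2 * D2\<^sup>2 / (\<beta> * (1 - \<beta>)\<^sup>2 * \<epsilon> ^ 3) \<le> 48 * \<rho> * M\<^sup>2 * D2\<^sup>2 / (\<beta> * (1 - \<beta>)\<^sup>2 * \<epsilon> ^ 3)"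
        using rho beta0 b1 eps0 by (intro divide_right_mono mult_right_mono) auto
      then show "32 * \<rho> * M\<^sup>2 * D2\<^sup>2 / (\<beta> * (1 - \<beta>)\<^sup>2 * \<epsilon> ^ 3) + 32 * M\<^sup>2 / (\<beta> * (1 - \<beta>)\<^sup>2 * \<rho>\<^sup>2 * D2)
        \<le> 48 * \<rho> * M\<^sup>2 * D2\<^sup>2 / (\<beta> * (1 - \<beta>)\<^sup>2 * \<epsilon> ^ 3) + 32 * M\<^sup>2 / (\<beta> * (1 - \<beta>)\<^sup>2 * \<rho>\<^sup>2 * D2)"
        by linarith
    qed
    finally show ?thesis using hK bef descb unfolding R_def Ecl_def N0_def by blast
  qed
qed

end
theorem theorem1:
  fixes f :: "'a::euclidean_space \<Rightarrow> real" and g :: "'a \<Rightarrow> 'a"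
    and x z :: "nat \<Rightarrow> 'a" and fm :: "nat \<Rightarrow> 'a \<Rightarrow> real"
    and \<beta> \<rho> M D2 \<epsilon> :: real
  assumes convex: "convex_on UNIV f"
    and lip: "\<forall>u v. \<bar>f u - f v\<bar> \<le> M * norm (u - v)"
    and attained: "Xstar f \<noteq> {}"
    and subgr: "\<forall>u. g u \<in> subdiff f u"
    and beta: "0 < \<beta>" "\<beta> < 1"
    and rho: "\<rho> > 0"
    and run: "pbm_run f g \<beta> (\<lambda>k. \<rho>) x z fm"
    and bdd: "bdd_above (range (\<lambda>k. (infdist (x k) (Xstar f))\<^sup>2))"
    and D2_def: "D2 = (SUP k. (infdist (x k) (Xstar f))\<^sup>2)"
    and D2_pos: "0 < D2"
    and eps: "0 < \<epsilon>" "\<epsilon> \<le> f (x 0) - fstar f"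
  shows "\<exists>K. f (x K) - fstar f \<le> \<epsilon> \<and> (\<forall>k<K. f (x k) - fstar f > \<epsilon>) \<and>
     real (card {k. k < K \<and> is_descent f \<beta> fm x z k})
       \<le> 2 * \<rho> * D2 / (\<beta> * \<epsilon>)
          + real_of_int (max \<lceil>2 * ln ((f (x 0) - fstar f) / (\<rho> * D2)) / \<beta>\<rceil> 0) \<and>
     real (card {k. k < K \<and> \<not> is_descent f \<beta> fm x z k})
       \<le> 48 * \<rho> * M\<^sup>2 * D2\<^sup>2 / (\<beta> * (1 - \<beta>)\<^sup>2 * \<epsilon> ^ 3)
          + 32 * M\<^sup>2 / (\<beta> * (1 - \<beta>)\<^sup>2 * \<rho>\<^sup>2 * D2)"
proof -
  interpret P: pbm f g x z fm \<beta> \<rho> M D2 \<epsilon>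
    using assms by unfold_locales auto
  obtain K where K: "P.h K \<le> \<epsilon>" "\<forall>k<K. P.h k > \<epsilon>"
    "real (card (P.DS K)) \<le> 2 * \<rho> * D2 / (\<beta> * \<epsilon>) + real_of_int (max \<lceil>P.L\<rceil> 0)"
    "real (card (P.NS K)) \<le> 48 * \<rho> * M\<^sup>2 * D2\<^sup>2 / (\<beta> * (1 - \<beta>)\<^sup>2 * \<epsilon> ^ 3)
          + 32 * M\<^sup>2 / (\<beta> * (1 - \<beta>)\<^sup>2 * \<rho>\<^sup>2 * D2)"
    using P.main by blast
  show ?thesis
    apply (rule exI[of _ K])
    using K unfolding P.h_def P.DS_def P.NS_def P.desc_def P.L_def by simp
qed

end
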